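(* Let $A$ be a real $n\times n$ nonsingular skew-symmetric matrix ($A^t=-A$), $b\in\mathbb{R}^n$, and $x$ the solution of $Ax=b$. Let $m\ge 0$, $q_e=\lceil m/2\rceil$, $q_o=\lfloor m/2\rfloor$, and let $z\in\mathcal{K}_m(A,b)$ be written as $z=z_e+z_o$ with $z_e\in\mathcal{K}_{q_e}(A^2,b)$ and $z_o\in\mathcal{K}_{q_o}(A^2,Ab)$. Then \[\|z-x\|^2=\|z_o-x\|^2+\|z_e\|^2\quad\text{and}\quad \|b-Az\|^2=\|b-Az_o\|^2+\|Az_e\|^2.\]
   Context: For a matrix $B$, a vector $c$ and an integer $m\ge 0$, the Krylov subspace is $\mathcal{K}_m(B,c)=\operatorname{span}\{c,Bc,\ldots,B^{m-1}c\}$ (with $\mathcal{K}_0(B,c)=\{0\}$). $\|\cdot\|$ is the Euclidean norm. Every $z\in\mathcal{K}_m(A,b)$ admits such a decomposition by grouping even and odd powers of $A$. *)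

theory Defs
  imports "HOL-Analysis.Analysis"
begin

definition krylov :: "real^'n^'n \<Rightarrow> real^'n \<Rightarrow> nat \<Rightarrow> (real^'n) set" where
  "krylov B c m = span {((\<lambda>v. B *v v) ^^ k) c | k. k < m}"

end

theory Submission
  imports Defs
begin

lemma skew_inner:
  fixes A :: "real^'n^'n"
  assumes "transpose A = - A"
  shows "(A *v u) \<bullet> v = - (u \<bullet> (A *v v))"
proof -
  have "(A *v u) \<bullet> v = (u v* transpose A) \<bullet> v" by simp
  also have "\<dots> = u \<bullet> (transpose A *v v)" by (rule dot_lmul_matrix)
  also have "\<dots> = - (u \<bullet> (A *v v))"
  proof -
    have "(- A) *v v = - (A *v v)"
      by (simp add: vec_eq_iff matrix_vector_mult_def sum_negf)
    then show ?thesis using assms by simp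
  qed
  finally show ?thesis .
qed

lemma ortho_spans:
  assumes "\<forall>a\<in>S. \<forall>c\<in>T. orthogonal a c" "a \<in> span S" "c \<in> span T"
  shows "orthogonal a c"
proof -
  have "\<forall>c\<in>T. orthogonal a c"
  proof
    fix c assume "c \<in> T"
    have "span S \<subseteq> {y. orthogonal y c}"
      apply (rule span_minimal)
      using assms(1) \<open>c \<in> T\<close> apply blast
      using subspace_orthogonal_to_vector[of c] by (simp add: orthogonal_commute)
    then show "orthogonal a c" using assms(2) by blast
  qed
  then have "span T \<subseteq> {y. orthogonal a y}"
    by (intro span_minimal subspace_orthogonal_to_vector) blast
  then show ?thesis using assms(3) by blast
qed

lemma sq_pow:
  fixes A :: "real^'n^'n"
  shows "((\<lambda>v. (A ** A) *v v) ^^ k) v = ((\<lambda>v. A *v v) ^^ (2*k)) v"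
  by (induction k) (auto simp: matrix_vector_mul_assoc[symmetric])

theorem theorem2:
  fixes A :: "real^'n^'n" and b x z ze zo :: "real^'n" and m :: nat
  assumes "invertible A"
    and "transpose A = - A"
    and "A *v x = b"
    and "z \<in> krylov A b m"
    and "z = ze + zo"
    and "ze \<in> krylov (A ** A) b ((m + 1) div 2)"
    and "zo \<in> krylov (A ** A) (A *v b) (m div 2)"
  shows "(norm (z - x))\<^sup>2 = (norm (zo - x))\<^sup>2 + (norm ze)\<^sup>2
       \<and> (norm (b - A *v z))\<^sup>2 = (norm (b - A *v zo))\<^sup>2 + (norm (A *v ze))\<^sup>2"
proof -
  define F where "F = (\<lambda>v. A *v v)"
  define g where "g i j = (F ^^ i) x \<bullet> (F ^^ j) x" for i j
  have gS: "g (Suc i) j = - g i (Suc j)" for i j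
    unfolding g_def F_def using skew_inner[OF assms(2)] by simp
  have g0: "g i j = (-1)^i * g 0 (i+j)" for i j
  proof (induction i arbitrary: j)
    case 0 then show ?case by simp
  next
    case (Suc i) then show ?case using gS[of i j] Suc[of "Suc j"] by simp
  qed
  have godd: "g i j = 0" if "odd (i+j)" for i j
  proof -
    have "g (i+j) 0 = - g 0 (i+j)" using g0[of "i+j" 0] that by simp
    moreover have "g (i+j) 0 = g 0 (i+j)" unfolding g_def by (simp add: inner_commute)
    ultimately have "g 0 (i+j) = 0" by simp
    then show ?thesis using g0[of i j] by simp
  qed
  define E where "E = range (\<lambda>k. (F ^^ (2*k)) x)"
  define Od where "Od = range (\<lambda>k. (F ^^ (2*k+1)) x)"
  have EO: "\<forall>a\<in>E. \<forall>c\<in>Od. orthogonal a c"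
  proof (intro ballI)
    fix a c assume "a \<in> E" "c \<in> Od"
    then obtain i j where "a = (F ^^ (2*i)) x" "c = (F ^^ (2*j+1)) x"
      unfolding E_def Od_def by blast
    moreover have "g (2*i) (2*j+1) = 0" by (rule godd) simp
    ultimately show "orthogonal a c" unfolding orthogonal_def g_def by simp
  qed
  have lin: "linear F" unfolding F_def by (rule matrix_vector_mul_linear)
  have ze: "ze \<in> span Od"
  proof -
    have "krylov (A ** A) b ((m + 1) div 2) \<subseteq> span Od"
      unfolding krylov_def
    proof (rule span_mono, clarify)
      fix k :: nat
      have "((\<lambda>v. (A ** A) *v v) ^^ k) b = (F ^^ (2*k)) (F x)"
        using sq_pow assms(3) unfolding F_def by metis
      also have "\<dots> = (F ^^ (2*k+1)) x" by (simp add: funpow_Suc_right del: funpow.simps)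
      finally show "((\<lambda>v. (A ** A) *v v) ^^ k) b \<in> Od" unfolding Od_def by auto
    qed
    then show ?thesis using assms(6) by blast
  qed
  have zo: "zo \<in> span E"
  proof -
    have "krylov (A ** A) (A *v b) (m div 2) \<subseteq> span E"
      unfolding krylov_def
    proof (rule span_mono, clarify)
      fix k :: nat
      have "((\<lambda>v. (A ** A) *v v) ^^ k) (A *v b) = (F ^^ (2*k)) (F (F x))"
        using sq_pow assms(3) unfolding F_def by metis
      also have "\<dots> = (F ^^ (2*(k+1))) x"
        by (simp add: funpow_Suc_right del: funpow.simps)
      finally show "((\<lambda>v. (A ** A) *v v) ^^ k) (A *v b) \<in> E" unfolding E_def by blast
    qed
    then show ?thesis using assms(7) by blast
  qed
  have xE: "x \<in> span E"
    by (rule span_base) (auto simp: E_def intro!: image_eqI[where x=0])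
  have FO: "F ` Od \<subseteq> E"
    unfolding Od_def E_def by (auto intro!: image_eqI[where x="Suc _"])
  have FE: "F ` E \<subseteq> Od"
    unfolding Od_def E_def by auto
  have Aze: "F ze \<in> span E"
    using ze span_mono[OF FO] span_linear_image[OF lin, of Od] by blast
  have xzo: "x - zo \<in> span E" using xE zo by (simp add: span_diff)
  have Axzo: "F (x - zo) \<in> span Od"
    using xzo span_mono[OF FE] span_linear_image[OF lin, of E] by blast
  have o1: "orthogonal (zo - x) ze"
    using ortho_spans[OF EO _ ze] zo xE by (simp add: span_diff)
  have o2: "orthogonal (A *v ze) (b - A *v zo)"
  proof -
    have "b - A *v zo = F (x - zo)" unfolding F_def using assms(3)
      by (simp add: matrix_vector_mult_diff_distrib)
    then show ?thesis using ortho_spans[OF EO Aze Axzo] unfolding F_def by simp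
  qed
  have "z - x = (zo - x) + ze" using assms(5) by simp
  then have 1: "(norm (z - x))\<^sup>2 = (norm (zo - x))\<^sup>2 + (norm ze)\<^sup>2"
    using norm_add_Pythagorean[OF o1] by metis
  have "b - A *v z = (b - A *v zo) + (- (A *v ze))" using assms(5)
    by (simp add: matrix_vector_right_distrib)
  moreover have "orthogonal (b - A *v zo) (- (A *v ze))"
    using o2 by (simp add: orthogonal_commute orthogonal_clauses)
  ultimately have 2: "(norm (b - A *v z))\<^sup>2 = (norm (b - A *v zo))\<^sup>2 + (norm (A *v ze))\<^sup>2"
    using norm_add_Pythagorean by (metis norm_minus_cancel)
  show ?thesis using 1 2 by simp
qed

end
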